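(* Let $A,B\subseteq\mathbb R$ be nonempty bounded open intervals. Then $\mathfrak{ss}_l^A=\mathfrak{ss}_l^B$.
   Context: Let $\mathfrak S_{cc}$ be the set of all sequences $\mathbf a=\langle a_i:i\in\omega\rangle$ of rational numbers with $a_i\to0$ such that $\sum_i a_i$ is conditionally convergent (converges to a real number, with the positive terms summing to $+\infty$ and the negative terms to $-\infty$). Let $[\omega]^\omega_\omega$ be the set of infinite coinfinite subsets of $\omega$; for such $X$ with increasing enumeration $\langle i_n\rangle$, $\sum_X\mathbf a$ denotes $\sum_n a_{i_n}$. For $A\subseteq\mathbb R$, $\mathfrak{ss}_l^A$ is the least cardinality of $\mathcal X\subseteq[\omega]^\omega_\omega$ such that every $\mathbf a\in\mathfrak S_{cc}$ has some $X\in\mathcal X$ for which $\sum_X\mathbf a$ converges to a limit in $A$. *)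

theory Defs
  imports "HOL-Analysis.Analysis" "HOL-Library.Infinite_Set"
begin

definition Scc :: "(nat \<Rightarrow> rat) set" where
  "Scc = {a. (\<lambda>i. real_of_rat (a i)) \<longlonglongrightarrow> 0
             \<and> summable (\<lambda>i. real_of_rat (a i))
             \<and> filterlim (\<lambda>n. \<Sum>i<n. max 0 (real_of_rat (a i))) at_top sequentially
             \<and> filterlim (\<lambda>n. \<Sum>i<n. min 0 (real_of_rat (a i))) at_bot sequentially}"

definition infcoinf :: "nat set set" where
  "infcoinf = {X. infinite X \<and> infinite (UNIV - X)}"

definition subseries_conv_in :: "real set \<Rightarrow> nat set \<Rightarrow> (nat \<Rightarrow> rat) \<Rightarrow> bool" where
  "subseries_conv_in A X a \<longleftrightarrow> (\<exists>L\<in>A. (\<lambda>n. real_of_rat (a (enumerate X n))) sums L)"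

definition ss_witness :: "real set \<Rightarrow> nat set set \<Rightarrow> bool" where
  "ss_witness A FF \<longleftrightarrow> FF \<subseteq> infcoinf \<and> (\<forall>a\<in>Scc. \<exists>X\<in>FF. subseries_conv_in A X a)"

text \<open>ss_l^A as a cardinal (a well-order on a witness family of least cardinality);
  cardinal equality is ordIso (=o).\<close>
definition ssl :: "real set \<Rightarrow> nat set rel" where
  "ssl A = card_of (SOME FF. ss_witness A FF \<and> (\<forall>GG. ss_witness A GG \<longrightarrow> (card_of FF, card_of GG) \<in> ordLeq))"

end

theory Submission
  imports Defs "HOL-Library.Countable_Set_Type"
begin

definition rr :: "(nat \<Rightarrow> rat) \<Rightarrow> nat \<Rightarrow> real" where
  "rr x i = real_of_rat (x i)"

lemma enum_sums_iff:
  fixes f :: "nat \<Rightarrow> real"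
  assumes "infinite X"
  shows "(\<lambda>n. f (enumerate X n)) sums L \<longleftrightarrow> (\<lambda>i. if i \<in> X then f i else 0) sums L"
proof -
  have "(\<lambda>n. (\<lambda>i. if i \<in> X then f i else 0) (enumerate X n)) sums L \<longleftrightarrow> (\<lambda>i. if i \<in> X then f i else 0) sums L"
    by (rule sums_mono_reindex) (use assms range_enumerate strict_mono_enumerate in auto)
  moreover have "(\<lambda>n. (\<lambda>i. if i \<in> X then f i else 0) (enumerate X n)) = (\<lambda>n. f (enumerate X n))"
    using enumerate_in_set[OF assms] by auto
  ultimately show ?thesis by simp
qed

lemma subseries_iff:
  assumes "infinite X"
  shows "subseries_conv_in A X x \<longleftrightarrow> (\<exists>L\<in>A. (\<lambda>i. if i \<in> X then rr x i else 0) sums L)"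
  unfolding subseries_conv_in_def using enum_sums_iff[OF assms, of "rr x"] by (simp add: rr_def)

lemma Scc_iff: "x \<in> Scc \<longleftrightarrow> (rr x \<longlonglongrightarrow> 0 \<and> summable (rr x)
  \<and> filterlim (\<lambda>n. \<Sum>i<n. max 0 (rr x i)) at_top sequentially
  \<and> filterlim (\<lambda>n. \<Sum>i<n. min 0 (rr x i)) at_bot sequentially)"
  unfolding Scc_def rr_def by simp

lemma Scc_finmod:
  assumes x: "x \<in> Scc" and fin: "finite {i. z i \<noteq> x i}"
  shows "z \<in> Scc"
proof -
  define D where "D = {i. z i \<noteq> x i}"
  define C where "C = (\<Sum>i\<in>D. \<bar>rr z i - rr x i\<bar>)"
  have d: "\<bar>(\<Sum>i<n. g (rr z i)) - (\<Sum>i<n. g (rr x i))\<bar> \<le> C"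
    if g: "\<And>u v. \<bar>g u - g v\<bar> \<le> \<bar>u - v\<bar>" for n and g :: "real \<Rightarrow> real"
  proof -
    have "\<bar>(\<Sum>i<n. g (rr z i)) - (\<Sum>i<n. g (rr x i))\<bar> = \<bar>\<Sum>i<n. g (rr z i) - g (rr x i)\<bar>"
      by (simp add: sum_subtractf)
    also have "\<dots> \<le> (\<Sum>i<n. \<bar>g (rr z i) - g (rr x i)\<bar>)" by (rule sum_abs)
    also have "\<dots> \<le> (\<Sum>i<n. \<bar>rr z i - rr x i\<bar>)" by (intro sum_mono g)
    also have "\<dots> = (\<Sum>i\<in>{..<n} \<inter> D. \<bar>rr z i - rr x i\<bar>)"
      by (rule sum.mono_neutral_right) (auto simp: D_def rr_def)
    also have "\<dots> \<le> C" unfolding C_def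
      by (rule sum_mono2) (use fin D_def in auto)
    finally show ?thesis .
  qed
  have dmax: "(\<Sum>i<n. max 0 (rr x i)) - C \<le> (\<Sum>i<n. max 0 (rr z i))" for n
  proof -
    have "\<bar>max 0 u - max 0 v\<bar> \<le> \<bar>u - v\<bar>" for u v :: real by (auto simp: abs_le_iff max_def)
    then show ?thesis using d[of "\<lambda>u. max 0 u" n] by (auto simp: abs_le_iff)
  qed
  have dmin: "(\<Sum>i<n. min 0 (rr z i)) \<le> (\<Sum>i<n. min 0 (rr x i)) + C" for n
  proof -
    have "\<bar>min 0 u - min 0 v\<bar> \<le> \<bar>u - v\<bar>" for u v :: real by (auto simp: abs_le_iff min_def)
    then show ?thesis using d[of "\<lambda>u. min 0 u" n] by (auto simp: abs_le_iff)
  qed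
  have xs: "rr x \<longlonglongrightarrow> 0" "summable (rr x)"
    "filterlim (\<lambda>n. \<Sum>i<n. max 0 (rr x i)) at_top sequentially"
    "filterlim (\<lambda>n. \<Sum>i<n. min 0 (rr x i)) at_bot sequentially"
    using x by (auto simp: Scc_iff)
  have ev: "\<forall>\<^sub>F i in sequentially. rr z i = rr x i"
  proof -
    obtain N where "\<forall>i\<in>D. i < N" using fin unfolding D_def
      by (meson finite_nat_bounded lessThan_iff subsetD)
    then show ?thesis unfolding eventually_sequentially D_def rr_def
      by (metis (mono_tags, lifting) mem_Collect_eq not_le)
  qed
  have "rr z \<longlonglongrightarrow> 0" using tendsto_cong[OF ev] xs(1) by simp
  moreover have "summable (rr z)"
  proof -
    have "summable (\<lambda>i. rr z i - rr x i)"
      apply (rule summable_finite[of D]) using fin by (auto simp: D_def rr_def)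
    from summable_add[OF this xs(2)] show ?thesis by simp
  qed
  moreover have "filterlim (\<lambda>n. \<Sum>i<n. max 0 (rr z i)) at_top sequentially"
  proof -
    have h: "filterlim (\<lambda>n. (- C) + (\<Sum>i<n. max 0 (rr x i))) at_top sequentially"
      by (rule filterlim_tendsto_add_at_top[OF tendsto_const xs(3)])
    have "\<forall>n. (- C) + (\<Sum>i<n. max 0 (rr x i)) \<le> (\<Sum>i<n. max 0 (rr z i))"
      using dmax by (metis add.commute diff_conv_add_uminus)
    then show ?thesis by (rule filterlim_at_top_mono[OF h always_eventually])
  qed
  moreover have "filterlim (\<lambda>n. \<Sum>i<n. min 0 (rr z i)) at_bot sequentially"
  proof -
    have h1: "filterlim (\<lambda>n. C + (\<Sum>i<n. min 0 (rr x i))) at_bot sequentially"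
      using filterlim_tendsto_add_at_bot_iff[OF tendsto_const, of C] xs(4) by (rule iffD2)
    have h2: "filterlim (\<lambda>n. - (C + (\<Sum>i<n. min 0 (rr x i)))) at_top sequentially"
      using filterlim_uminus_at_bot[THEN iffD1, OF h1] .
    have "\<forall>n. - (C + (\<Sum>i<n. min 0 (rr x i))) \<le> - (\<Sum>i<n. min 0 (rr z i))"
      using dmin by (metis add.commute neg_le_iff_le)
    then have h3: "filterlim (\<lambda>n. - (\<Sum>i<n. min 0 (rr z i))) at_top sequentially"
      by (rule filterlim_at_top_mono[OF h2 always_eventually])
    show ?thesis using filterlim_uminus_at_bot[THEN iffD2, OF h3] .
  qed
  ultimately show ?thesis by (simp add: Scc_iff)
qed


lemma Scc_scale:
  assumes x: "x \<in> Scc" and c: "0 < c"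
  shows "(\<lambda>i. c * x i) \<in> Scc"
proof -
  define r where "r = real_of_rat c"
  have r: "r > 0" using c by (simp add: r_def)
  have e: "rr (\<lambda>i. c * x i) = (\<lambda>i. r * rr x i)" by (auto simp: rr_def r_def of_rat_mult)
  have mx: "max 0 (r * v) = r * max 0 v" for v using r by (simp add: max_def zero_le_mult_iff)
  have mn: "min 0 (r * v) = r * min 0 v" for v using r by (auto simp: min_def zero_le_mult_iff)
  have xs: "rr x \<longlonglongrightarrow> 0" "summable (rr x)"
    "filterlim (\<lambda>n. \<Sum>i<n. max 0 (rr x i)) at_top sequentially"
    "filterlim (\<lambda>n. \<Sum>i<n. min 0 (rr x i)) at_bot sequentially"
    using x by (auto simp: Scc_iff)
  show ?thesis unfolding Scc_iff e mx mn sum_distrib_left[symmetric]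
    using tendsto_mult_right_zero[OF xs(1), of r] summable_mult[OF xs(2), of r]
      filterlim_tendsto_pos_mult_at_top[OF tendsto_const r xs(3)]
      filterlim_tendsto_pos_mult_at_bot[OF tendsto_const r xs(4)] by auto
qed

lemma approx_pos:
  fixes y :: "nat \<Rightarrow> real"
  assumes y0: "y \<longlonglongrightarrow> 0" and yt: "filterlim (\<lambda>n. \<Sum>i<n. max 0 (y i)) at_top sequentially"
    and t: "t \<ge> 0" and d: "\<delta> > 0"
  shows "\<exists>E. finite E \<and> \<bar>(\<Sum>i\<in>E. y i) - t\<bar> < \<delta>"
proof -
  obtain N where N: "\<And>i. i \<ge> N \<Longrightarrow> \<bar>y i\<bar> < \<delta>"
    using y0 d unfolding LIMSEQ_iff by (metis real_norm_def diff_zero)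
  define p where "p n = (\<Sum>i\<in>{N..<n}. max 0 (y i))" for n
  have split: "(\<Sum>i<n. max 0 (y i)) = (\<Sum>i<N. max 0 (y i)) + p n" if "N \<le> n" for n
  proof -
    have "{..<n} = {..<N} \<union> {N..<n}" using that by auto
    then show ?thesis unfolding p_def by (simp add: sum.union_disjoint ivl_disj_int)
  qed
  have "\<forall>\<^sub>F n in sequentially. t + (\<Sum>i<N. max 0 (y i)) \<le> (\<Sum>i<n. max 0 (y i))"
    using yt by (simp add: filterlim_at_top)
  then obtain n0 where n0: "\<And>n. n \<ge> n0 \<Longrightarrow> t + (\<Sum>i<N. max 0 (y i)) \<le> (\<Sum>i<n. max 0 (y i))"
    unfolding eventually_sequentially by blast
  have ex: "\<exists>n. N \<le> n \<and> t \<le> p n"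
    using n0[of "max n0 N"] split[of "max n0 N"] by (intro exI[of _ "max n0 N"]) auto
  define M where "M = (LEAST n. N \<le> n \<and> t \<le> p n)"
  have M: "N \<le> M" "t \<le> p M" using LeastI_ex[OF ex] unfolding M_def by auto
  have pM: "p M < t + \<delta>"
  proof (cases "M = N")
    case True
    then show ?thesis using M d t by (simp add: p_def)
  next
    case False
    then obtain M' where M': "M = Suc M'" "N \<le> M'" using M by (cases M) auto
    have "\<not> (N \<le> M' \<and> t \<le> p M')" using not_less_Least[of M' "\<lambda>n. N \<le> n \<and> t \<le> p n"] M'
      unfolding M_def by auto
    then have "p M' < t" using M' by auto
    moreover have "p M = p M' + max 0 (y M')" unfolding p_def M' using M' by simp
    moreover have "max 0 (y M') < \<delta>" using N[OF M'(2)] d by auto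
    ultimately show ?thesis by linarith
  qed
  define E where "E = {i \<in> {N..<M}. y i > 0}"
  have "(\<Sum>i\<in>E. y i) = p M"
    unfolding E_def p_def by (subst sum.inter_filter) (auto intro!: sum.cong simp: max_def)
  then show ?thesis using M pM by (intro exI[of _ E]) (auto simp: E_def)
qed

lemma approx_E:
  assumes x: "x \<in> Scc" and d: "\<delta> > 0"
  shows "\<exists>E. finite E \<and> \<bar>(\<Sum>i\<in>E. rr x i) - t\<bar> < \<delta>"
proof (cases "t \<ge> 0")
  case True
  then show ?thesis using approx_pos[of "rr x" t \<delta>] x d by (auto simp: Scc_iff)
next
  case False
  have xs: "rr x \<longlonglongrightarrow> 0" "filterlim (\<lambda>n. \<Sum>i<n. min 0 (rr x i)) at_bot sequentially"
    using x by (auto simp: Scc_iff)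
  have "(\<lambda>i. - rr x i) \<longlonglongrightarrow> 0" using tendsto_minus[OF xs(1)] by simp
  moreover have mm: "max 0 (- v) = - min 0 v" for v :: real by (simp add: max_def min_def)
  have "filterlim (\<lambda>n. \<Sum>i<n. max 0 (- rr x i)) at_top sequentially"
    unfolding mm sum_negf using filterlim_uminus_at_bot[THEN iffD1, OF xs(2)] .
  ultimately obtain E where "finite E" "\<bar>(\<Sum>i\<in>E. - rr x i) - (- t)\<bar> < \<delta>"
    using approx_pos[of "\<lambda>i. - rr x i" "- t" \<delta>] d False by auto
  then show ?thesis by (intro exI[of _ E]) (auto simp: sum_negf abs_minus_commute)
qed


lemma no_finite_witness:
  assumes ne: "Scc \<noteq> {}" and F: "F \<subseteq> infcoinf" and fin: "finite F"
  shows "\<not> (\<forall>x\<in>Scc. \<exists>X\<in>F. subseries_conv_in {a<..<b} X x)"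
proof
  assume W: "\<forall>x\<in>Scc. \<exists>X\<in>F. subseries_conv_in {a<..<b} X x"
  obtain x0 where x0: "x0 \<in> Scc" using ne by auto
  define P where "P = (\<lambda>X. LEAST i. i \<in> X) ` F"
  have finP: "finite P" unfolding P_def using fin by simp
  define cX where "cX X = suminf (\<lambda>i. if i \<in> X - P then rr x0 i else 0)" for X
  obtain q :: nat where q: "real q > \<bar>b\<bar> + (\<Sum>X\<in>F. \<bar>cX X\<bar>)"
    using reals_Archimedean2 by blast
  define xq where "xq i = (if i \<in> P then of_nat q else x0 i)" for i
  have "{i. xq i \<noteq> x0 i} \<subseteq> P" unfolding xq_def by auto
  then have "xq \<in> Scc" using Scc_finmod[OF x0] finP finite_subset by blast
  then obtain X L where X: "X \<in> F" and L: "L \<in> {a<..<b}"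
    and s: "(\<lambda>i. if i \<in> X then rr xq i else 0) sums L"
    using W F subseries_iff unfolding infcoinf_def by blast
  have infX: "infinite X" using X F unfolding infcoinf_def by auto
  then have "X \<noteq> {}" by auto
  then have "(LEAST i. i \<in> X) \<in> X \<inter> P" using X unfolding P_def by (auto intro: LeastI)
  then have n1: "card (X \<inter> P) \<ge> 1" using finP
    by (metis One_nat_def Suc_leI card_gt_0_iff empty_iff finite_Int)
  have s2: "(\<lambda>i. if i \<in> X \<inter> P then real q else 0) sums (\<Sum>i\<in>X \<inter> P. real q)"
    by (rule sums_If_finite_set) (use finP in auto)
  have eq: "(\<lambda>i. if i \<in> X - P then rr x0 i else 0) =
     (\<lambda>i. (if i \<in> X then rr xq i else 0) - (if i \<in> X \<inter> P then real q else 0))"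
    by (auto simp: xq_def rr_def)
  have "(\<lambda>i. if i \<in> X - P then rr x0 i else 0) sums (L - real (card (X \<inter> P)) * real q)"
    unfolding eq using sums_diff[OF s s2] by simp
  then have c: "cX X = L - real (card (X \<inter> P)) * real q"
    unfolding cX_def by (rule sums_unique[symmetric])
  have "\<bar>cX X\<bar> \<le> (\<Sum>X\<in>F. \<bar>cX X\<bar>)" by (rule member_le_sum) (use X fin in auto)
  moreover have "real (card (X \<inter> P)) * real q \<ge> 1 * real q"
    by (rule mult_right_mono) (use n1 in auto)
  ultimately have "L > \<bar>b\<bar>" using c q by linarith
  then show False using L by auto
qed

lemma witness_shift:
  assumes F: "ss_witness {a<..<b} F" and cd: "c < d"
  shows "ss_witness {c<..<d} ((\<lambda>p. fst p \<union> snd p) ` (F \<times> Collect finite))"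
  unfolding ss_witness_def
proof (intro conjI ballI)
  show "(\<lambda>p. fst p \<union> snd p) ` (F \<times> Collect finite) \<subseteq> infcoinf"
  proof
    fix Y assume "Y \<in> (\<lambda>p. fst p \<union> snd p) ` (F \<times> Collect finite)"
    then obtain X E where "X \<in> F" "finite E" "Y = X \<union> E" by auto
    moreover have "X \<in> infcoinf" using \<open>X \<in> F\<close> F unfolding ss_witness_def by auto
    moreover have "UNIV - (X \<union> E) = (UNIV - X) - E" by auto
    ultimately show "Y \<in> infcoinf" unfolding infcoinf_def
      using Diff_infinite_finite[of E "UNIV - X"] by auto
  qed
next
  fix x assume x: "x \<in> Scc"
  define t where "t = (c + d) / 2"
  define \<delta> where "\<delta> = (d - c) / 2"
  have d0: "\<delta> > 0" using cd by (simp add: \<delta>_def)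
  obtain E where finE: "finite E" and E: "\<bar>(\<Sum>i\<in>E. rr x i) - t\<bar> < \<delta> / 2"
    using approx_E[OF x, of "\<delta> / 2" t] d0 by auto
  define z where "z i = (if i \<in> E then 0 else x i)" for i
  have "{i. z i \<noteq> x i} \<subseteq> E" unfolding z_def by auto
  then have z: "z \<in> Scc" using Scc_finmod[OF x] finE finite_subset by blast
  define R where "R = \<bar>a\<bar> + \<bar>b\<bar>"
  define n :: nat where "n = nat \<lceil>2 * R / \<delta>\<rceil> + 1"
  have n: "real n > 2 * R / \<delta>" unfolding n_def by linarith
  have n0: "n > 0" unfolding n_def by simp
  have w: "(\<lambda>i. of_nat n * z i) \<in> Scc" by (rule Scc_scale[OF z]) (use n0 in simp)
  then obtain X where X: "X \<in> F" and sc: "subseries_conv_in {a<..<b} X (\<lambda>i. of_nat n * z i)"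
    using F unfolding ss_witness_def by blast
  have infX: "infinite X" using X F unfolding ss_witness_def infcoinf_def by auto
  obtain L where L: "L \<in> {a<..<b}"
    and s: "(\<lambda>i. if i \<in> X then rr (\<lambda>i. of_nat n * z i) i else 0) sums L"
    using sc subseries_iff[OF infX] by blast
  have "(\<lambda>i. (1 / real n) * (if i \<in> X then rr (\<lambda>i. of_nat n * z i) i else 0)) sums ((1 / real n) * L)"
    by (rule sums_mult[OF s])
  moreover have "(\<lambda>i. (1 / real n) * (if i \<in> X then rr (\<lambda>i. of_nat n * z i) i else 0)) =
    (\<lambda>i. if i \<in> X then rr z i else 0)" using n0 by (auto simp: rr_def of_rat_mult)
  ultimately have s1: "(\<lambda>i. if i \<in> X then rr z i else 0) sums (L / real n)" by simp
  have s2: "(\<lambda>i. if i \<in> E then rr x i else 0) sums (\<Sum>i\<in>E. rr x i)"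
    by (rule sums_If_finite_set[OF finE])
  have eq: "(\<lambda>i. if i \<in> X \<union> E then rr x i else 0) =
    (\<lambda>i. (if i \<in> X then rr z i else 0) + (if i \<in> E then rr x i else 0))"
    by (auto simp: z_def rr_def)
  have s3: "(\<lambda>i. if i \<in> X \<union> E then rr x i else 0) sums (L / real n + (\<Sum>i\<in>E. rr x i))"
    unfolding eq by (rule sums_add[OF s1 s2])
  have LR: "\<bar>L\<bar> < R" using L unfolding R_def by auto
  have "\<bar>L / real n\<bar> < \<delta> / 2"
  proof -
    have "\<bar>L / real n\<bar> = \<bar>L\<bar> / real n" by simp
    also have "\<dots> \<le> R / real n" using LR n0 by (simp add: divide_right_mono)
    also have "\<dots> < \<delta> / 2"
    proof -
      have "2 * R < real n * \<delta>" using n d0 by (simp add: divide_less_eq mult.commute)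
      then show ?thesis using n0 by (simp add: divide_less_eq mult.commute)
    qed
    finally show ?thesis .
  qed
  then have "L / real n + (\<Sum>i\<in>E. rr x i) \<in> {c<..<d}"
  proof -
    have "\<bar>L / real n + (\<Sum>i\<in>E. rr x i) - t\<bar> < \<delta>" using E \<open>\<bar>L / real n\<bar> < \<delta> / 2\<close> by linarith
    moreover have "t + \<delta> = d" "t - \<delta> = c" unfolding t_def \<delta>_def by (simp_all add: field_simps)
    ultimately show ?thesis unfolding abs_less_iff greaterThanLessThan_iff by linarith
  qed
  moreover have "infinite (X \<union> E)" using infX by simp
  ultimately have "subseries_conv_in {c<..<d} (X \<union> E) x"
    using subseries_iff s3 by blast
  moreover have "X \<union> E \<in> (\<lambda>p. fst p \<union> snd p) ` (F \<times> Collect finite)"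
    using X finE by (intro image_eqI[of _ _ "(X, E)"]) auto
  ultimately show "\<exists>Y\<in>(\<lambda>p. fst p \<union> snd p) ` (F \<times> Collect finite). subseries_conv_in {c<..<d} Y x"
    by blast
qed


lemma card_le_shift:
  assumes F: "ss_witness {a<..<b} F" and cd: "c < d"
  shows "\<exists>G. ss_witness {c<..<d} G \<and> (card_of G, card_of F) \<in> ordLeq"
proof (cases "Scc = {}")
  case True
  then have "ss_witness {c<..<d} {}" unfolding ss_witness_def by auto
  then show ?thesis using card_of_empty by blast
next
  case False
  have inf: "infinite F"
    using no_finite_witness[OF False, of F a b] F unfolding ss_witness_def by blast
  define G where "G = (\<lambda>p. fst p \<union> snd p) ` (F \<times> Collect (finite :: nat set \<Rightarrow> bool))"
  have "ss_witness {c<..<d} G" unfolding G_def by (rule witness_shift[OF F cd])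
  moreover have "(card_of G, card_of F) \<in> ordLeq"
  proof -
    have 1: "(card_of G, card_of (F \<times> Collect (finite :: nat set \<Rightarrow> bool))) \<in> ordLeq"
      unfolding G_def by (rule card_of_image)
    have "(card_of (Collect (finite :: nat set \<Rightarrow> bool)), card_of (UNIV :: nat set)) \<in> ordLeq"
      using countable_Collect_finite countable_card_of_nat by blast
    moreover have "(card_of (UNIV :: nat set), card_of F) \<in> ordLeq"
      using inf infinite_iff_card_of_nat by blast
    ultimately have "(card_of (Collect (finite :: nat set \<Rightarrow> bool)), card_of F) \<in> ordLeq"
      by (rule ordLeq_transitive)
    then have 2: "(card_of (F \<times> Collect (finite :: nat set \<Rightarrow> bool)), card_of F) \<in> ordIso"
      using card_of_Times_infinite[OF inf, of "Collect finite"] by auto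
    show ?thesis using ordLeq_ordIso_trans[OF 1 2] .
  qed
  ultimately show ?thesis by blast
qed

lemma ssl_min:
  assumes "\<exists>F. ss_witness A F"
  shows "ss_witness A (SOME FF. ss_witness A FF \<and> (\<forall>GG. ss_witness A GG \<longrightarrow> (card_of FF, card_of GG) \<in> ordLeq))
    \<and> (\<forall>GG. ss_witness A GG \<longrightarrow> (card_of (SOME FF. ss_witness A FF \<and> (\<forall>GG. ss_witness A GG \<longrightarrow> (card_of FF, card_of GG) \<in> ordLeq)), card_of GG) \<in> ordLeq)"
proof -
  have "\<exists>r \<in> card_of ` {F. ss_witness A F}. \<forall>r' \<in> card_of ` {F. ss_witness A F}. (r, r') \<in> ordLeq"
    by (rule exists_minim_Well_order) (use assms card_of_Well_order in auto)
  then have "\<exists>FF. ss_witness A FF \<and> (\<forall>GG. ss_witness A GG \<longrightarrow> (card_of FF, card_of GG) \<in> ordLeq)"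
    by auto
  then show ?thesis by (rule someI_ex)
qed

theorem mainTheorem11:
  fixes a b c d :: real
  assumes "a < b" and "c < d"
  shows "(ssl {a<..<b}, ssl {c<..<d}) \<in> ordIso"
proof (cases "\<exists>F. ss_witness {a<..<b} F")
  case True
  then obtain F where F: "ss_witness {a<..<b} F" by blast
  then obtain G where G: "ss_witness {c<..<d} G" using card_le_shift[OF F assms(2)] by blast
  have exB: "\<exists>G. ss_witness {c<..<d} G" using G by blast
  note mA = ssl_min[OF True] and mB = ssl_min[OF exB]
  obtain G' where G': "ss_witness {c<..<d} G'" "(card_of G', ssl {a<..<b}) \<in> ordLeq"
    using card_le_shift[OF conjunct1[OF mA] assms(2)] unfolding ssl_def by blast
  obtain F' where F': "ss_witness {a<..<b} F'" "(card_of F', ssl {c<..<d}) \<in> ordLeq"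
    using card_le_shift[OF conjunct1[OF mB] assms(1)] unfolding ssl_def by blast
  have 1: "(ssl {c<..<d}, ssl {a<..<b}) \<in> ordLeq"
    using ordLeq_transitive[OF conjunct2[OF mB, rule_format, OF G'(1)] G'(2)] unfolding ssl_def .
  have 2: "(ssl {a<..<b}, ssl {c<..<d}) \<in> ordLeq"
    using ordLeq_transitive[OF conjunct2[OF mA, rule_format, OF F'(1)] F'(2)] unfolding ssl_def .
  show ?thesis using 1 2 ordIso_iff_ordLeq by blast
next
  case False
  have "\<not> (\<exists>G. ss_witness {c<..<d} G)"
    using card_le_shift[OF _ assms(1)] False by blast
  then have "(\<lambda>FF. ss_witness {a<..<b} FF \<and> (\<forall>GG. ss_witness {a<..<b} GG \<longrightarrow> (card_of FF, card_of GG) \<in> ordLeq))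
    = (\<lambda>FF. ss_witness {c<..<d} FF \<and> (\<forall>GG. ss_witness {c<..<d} GG \<longrightarrow> (card_of FF, card_of GG) \<in> ordLeq))"
    using False by auto
  then have "ssl {a<..<b} = ssl {c<..<d}" unfolding ssl_def by simp
  then show ?thesis unfolding ssl_def by (simp add: card_of_refl)
qed

end
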